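(* For any real numbers $t\ge1$ and $\varepsilon>0$, let $c=t-\lfloor t\rfloor$. There exists an indivisible-goods instance in which no allocation $A$ (i.e., no set of goods of size at most $\alpha$) gives every $t$-cohesive group an average satisfaction of at least $t-1+\frac{c(1-c)}{t}+\varepsilon$; that is, for every allocation some $t$-cohesive group has average satisfaction less than this value.
   Context: Model: There is a set of agents $N=\{1,\dots,n\}$. The resource consists of indivisible goods $G=\{g_1,\dots,g_m\}$ (no cake). Each agent $i$ approves a set $G_i\subseteq G$, and her utility for a set $A\subseteq G$ is $u_i(A)=|G_i\cap A|$. A parameter $\alpha\in(0,m]$ is given; an allocation is a set $A\subseteq G$ with $|A|\le\alpha$. For a real $t>0$, $N^*\subseteq N$ is $t$-cohesive if $|N^*|\ge t n/\alpha$ and $|\bigcap_{i\in N^*}G_i|\ge t$. The average satisfaction of a group $N'\subseteq N$ with respect to $A$ is $\frac1{|N'|}\sum_{i\in N'}u_i(A)$. *)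

theory Defs
  imports Complex_Main
begin

definition utility :: "(nat \<Rightarrow> nat set) \<Rightarrow> nat set \<Rightarrow> nat \<Rightarrow> nat" where
  "utility G A i = card (G i \<inter> A)"

definition is_instance :: "nat \<Rightarrow> nat \<Rightarrow> (nat \<Rightarrow> nat set) \<Rightarrow> real \<Rightarrow> bool" where
  "is_instance n m G \<alpha> \<longleftrightarrow> n \<ge> 1 \<and> (\<forall>i<n. G i \<subseteq> {0..<m}) \<and> 0 < \<alpha> \<and> \<alpha> \<le> real m"

definition is_allocation :: "nat \<Rightarrow> real \<Rightarrow> nat set \<Rightarrow> bool" where
  "is_allocation m \<alpha> A \<longleftrightarrow> A \<subseteq> {0..<m} \<and> real (card A) \<le> \<alpha>"

definition t_cohesive :: "nat \<Rightarrow> (nat \<Rightarrow> nat set) \<Rightarrow> real \<Rightarrow> real \<Rightarrow> nat set \<Rightarrow> bool" where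
  "t_cohesive n G \<alpha> t S \<longleftrightarrow> S \<subseteq> {0..<n} \<and> S \<noteq> {} \<and>
     real (card S) \<ge> t * real n / \<alpha> \<and> real (card (\<Inter>i\<in>S. G i)) \<ge> t"

definition avg_sat :: "(nat \<Rightarrow> nat set) \<Rightarrow> nat set \<Rightarrow> nat set \<Rightarrow> real" where
  "avg_sat G A S = (\<Sum>i\<in>S. real (utility G A i)) / real (card S)"

end

theory Submission
  imports Defs
begin

lemma cnt_set:
  fixes K P N y :: nat assumes "y < K"
  shows "{i. i < K*(P+N) \<and> P \<le> i div K \<and> i mod K = y} = (\<lambda>r. y + K*r) ` {P..<P+N}"
proof (intro set_eqI iffI)
  fix i assume "i \<in> {i. i < K*(P+N) \<and> P \<le> i div K \<and> i mod K = y}"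
  hence i: "i < K*(P+N)" "P \<le> i div K" "i mod K = y" by auto
  have "i div K < P + N" using i(1) by (metis less_mult_imp_div_less mult.commute)
  moreover have "i = y + K * (i div K)" using i(3) by (metis mod_mult_div_eq)
  ultimately show "i \<in> (\<lambda>r. y + K*r) ` {P..<P+N}" using i(2) by force
next
  fix i assume "i \<in> (\<lambda>r. y + K*r) ` {P..<P+N}"
  then obtain r where r: "P \<le> r" "r < P + N" "i = y + K*r" by auto
  have K0: "K > 0" using assms by simp
  have "i div K = r" using r(3) assms by simp
  moreover have "i mod K = y" using r(3) assms by simp
  moreover have "i < K*(P+N)"
  proof -
    have "Suc r \<le> P + N" using r by simp
    hence "K * Suc r \<le> K*(P+N)" by (rule mult_le_mono2)
    thus ?thesis using r(3) assms by simp
  qed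
  ultimately show "i \<in> {i. i < K*(P+N) \<and> P \<le> i div K \<and> i mod K = y}" using r by simp
qed

lemma cnt:
  fixes K P N y :: nat assumes "y < K"
  shows "card {i. i < K*(P+N) \<and> P \<le> i div K \<and> i mod K = y} = N"
proof -
  have "inj_on (\<lambda>r. y + K*r) {P..<P+N}" using assms by (auto simp: inj_on_def)
  thus ?thesis unfolding cnt_set[OF assms] by (simp add: card_image)
qed

lemma real_ineq:
  fixes k P N :: nat and c t \<epsilon> :: real
  assumes k: "k \<ge> 1" and t: "t = k + c" and c0: "0 \<le> c" and c1: "c < 1"
    and P1: "c * N < (1 - c) * P" and P2: "(1 - c) * P \<le> c * N + (1 - c)"
    and N: "real (Suc k) < N * \<epsilon>" and e: "\<epsilon> > 0"
  shows "real k * (real (Suc k) * P + (real k - 1) * N) / (real (Suc k) * P + real k * N)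
         < t - 1 + c * (1 - c) / t + \<epsilon>"
proof -
  define K where "K = real (Suc k)"
  define D where "D = K * P + real k * N"
  have "N \<noteq> 0" proof assume "N = 0" thus False using N by simp qed
  hence Npos: "real N > 0" by simp
  have tpos: "t > 0" using t k c0 by simp
  have kt: "real k \<le> t" using t c0 by simp
  have Dpos: "D > 0" unfolding D_def K_def using Npos k by (simp add: add_nonneg_pos)
  have D_ge: "D \<ge> real k * N" unfolding D_def K_def by simp
  have DN: "D \<ge> N" using D_ge k Npos by (smt (verit) mult_le_cancel_right1 of_nat_1 of_nat_mono)
  have lhs: "real k * (K * P + (real k - 1) * N) / D = k - k * N / D"
    using Dpos unfolding D_def by (simp add: field_simps)
  have tgt: "t - 1 + c * (1 - c) / t = k - k * (1 - c) / t"
    using tpos t by (simp add: field_simps)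
  have D1: "(1 - c) * D \<le> N * t + K * (1 - c)"
  proof -
    have "(1 - c) * D = K * ((1 - c) * P) + (1 - c) * k * N" unfolding D_def by (simp add: algebra_simps)
    also have "\<dots> \<le> K * (c * N + (1 - c)) + (1 - c) * k * N"
      using P2 K_def by (intro add_right_mono mult_left_mono) auto
    also have "\<dots> = N * t + K * (1 - c)" unfolding K_def t by (simp add: algebra_simps)
    finally show ?thesis .
  qed
  have "k * (1 - c) / t - k * N / D = k * ((1 - c) * D - N * t) / (t * D)"
    using tpos Dpos by (simp add: field_simps)
  also have "\<dots> \<le> k * (K * (1 - c)) / (t * D)"
    using D1 tpos Dpos by (intro divide_right_mono mult_left_mono) auto
  also have "\<dots> \<le> k * K / (t * D)"
    using tpos Dpos c0 c1 K_def by (intro divide_right_mono mult_left_mono) auto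
  also have "\<dots> \<le> t * K / (t * D)"
    using tpos Dpos kt K_def by (intro divide_right_mono mult_right_mono) auto
  also have "\<dots> = K / D" using tpos by simp
  also have "\<dots> \<le> K / N" using DN Npos K_def by (intro divide_left_mono) auto
  also have "\<dots> < \<epsilon>" using N Npos K_def by (simp add: divide_less_eq mult.commute)
  finally have "k * (1 - c) / t - k * N / D < \<epsilon>" .
  thus ?thesis unfolding tgt using lhs K_def D_def by simp
qed


lemma sum_card_swap:
  assumes "finite S" "finite A"
  shows "(\<Sum>i\<in>S. card (G i \<inter> A)) = (\<Sum>g\<in>A. card {i\<in>S. g \<in> G i})"
proof -
  have "(\<Sum>i\<in>S. card (G i \<inter> A)) = (\<Sum>i\<in>S. \<Sum>g\<in>A. if g \<in> G i then 1 else 0)"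
  proof (rule sum.cong[OF refl])
    fix i assume "i \<in> S"
    have "G i \<inter> A = {g\<in>A. g \<in> G i}" by auto
    hence "card (G i \<inter> A) = (\<Sum>g\<in>{g\<in>A. g \<in> G i}. 1)" by simp
    also have "\<dots> = (\<Sum>g\<in>A. if g \<in> G i then 1 else 0)" using assms(2) by (rule sum.inter_filter)
    finally show "card (G i \<inter> A) = (\<Sum>g\<in>A. if g \<in> G i then 1 else 0)" .
  qed
  also have "\<dots> = (\<Sum>g\<in>A. \<Sum>i\<in>S. if g \<in> G i then 1 else 0)" by (rule sum.swap)
  also have "\<dots> = (\<Sum>g\<in>A. card {i\<in>S. g \<in> G i})"
  proof (rule sum.cong[OF refl])
    fix g assume "g \<in> A"
    have "(\<Sum>i\<in>S. if g \<in> G i then 1 else 0) = (\<Sum>i\<in>{i\<in>S. g \<in> G i}. (1::nat))"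
      using assms(1) by (rule sum.inter_filter[symmetric])
    thus "(\<Sum>i\<in>S. if g \<in> G i then 1 else 0) = card {i\<in>S. g \<in> G i}" by simp
  qed
  finally show ?thesis .
qed

theorem mainTheorem20:
  fixes t \<epsilon> :: real
  assumes "t \<ge> 1" and "\<epsilon> > 0"
  shows "\<exists>n m G \<alpha>. is_instance n m G \<alpha> \<and>
           (\<forall>A. is_allocation m \<alpha> A \<longrightarrow>
              (\<exists>S. t_cohesive n G \<alpha> t S \<and>
                   avg_sat G A S < t - 1 + (t - of_int \<lfloor>t\<rfloor>) * (1 - (t - of_int \<lfloor>t\<rfloor>)) / t + \<epsilon>))"
proof -
  define k where "k = nat \<lfloor>t\<rfloor>"
  have fl1: "\<lfloor>t\<rfloor> \<ge> 1" using assms(1) by simp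
  have kreal: "real k = of_int \<lfloor>t\<rfloor>" unfolding k_def using fl1 by simp
  have k1: "k \<ge> 1" unfolding k_def using fl1 by linarith
  define c where "c = t - of_int \<lfloor>t\<rfloor>"
  have c0: "0 \<le> c" and c1: "c < 1" unfolding c_def by linarith+
  have tkc: "t = real k + c" unfolding c_def kreal by simp
  define K where "K = Suc k"
  define N where "N = nat \<lceil>real K / \<epsilon>\<rceil> + 1"
  define P where "P = nat \<lfloor>c * real N / (1 - c)\<rfloor> + 1"
  have NK: "real K < real N * \<epsilon>"
  proof -
    have "real K / \<epsilon> < real N" unfolding N_def by linarith
    thus ?thesis using assms(2) by (simp add: divide_less_eq)
  qed
  have cN0: "c * real N / (1 - c) \<ge> 0" using c0 c1 by simp
  have Pl: "c * real N / (1 - c) < real P" unfolding P_def using cN0 by linarith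
  have Pu: "real P \<le> c * real N / (1 - c) + 1" unfolding P_def using cN0 by linarith
  have P1: "c * real N < (1 - c) * real P" using Pl c1 by (simp add: divide_less_eq mult.commute)
  have P2: "(1 - c) * real P \<le> c * real N + (1 - c)"
  proof -
    have "(1 - c) * real P \<le> (1 - c) * (c * real N / (1 - c) + 1)"
      using Pu c1 by (intro mult_left_mono) auto
    also have "\<dots> = c * real N + (1 - c)" using c1 by (simp add: field_simps)
    finally show ?thesis .
  qed
  have N1: "N \<ge> 1" unfolding N_def by simp
  define n where "n = K * (P + N)"
  define m where "m = K * K"
  define G where "G = (\<lambda>i::nat. if i div K < P then {0..<m} else {g. g < m \<and> g div K \<noteq> i mod K})"
  define \<alpha> where "\<alpha> = t * real n / real (n - N)"
  have Kpos: "K > 0" unfolding K_def by simp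
  have nN: "n - N = K * P + k * N" unfolding n_def K_def by (simp add: algebra_simps)
  have nN2: "n - N - N = K * P + (k - 1) * N"
  proof -
    obtain k' where "k = Suc k'" using k1 by (cases k) auto
    thus ?thesis unfolding nN by simp
  qed
  have nNpos: "n - N > 0" unfolding nN using k1 N1 by (simp add: add_pos_nonneg)
  have npos: "real n > 0" using nNpos by simp
  have tpos: "t > 0" using assms(1) by simp
  have \<alpha>pos: "\<alpha> > 0" unfolding \<alpha>_def using npos tpos nNpos by simp
  have \<alpha>K: "\<alpha> < real K"
  proof -
    have "t * real n < real K * real (n - N)"
    proof -
      have rn: "real n = real K * (real P + real N)" unfolding n_def by simp
      have rnN: "real (n - N) = real K * real P + real k * real N" unfolding nN by simp
      have lt: "t * (real P + real N) < real K * real P + real k * real N"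
        using P1 tkc unfolding K_def by (simp add: algebra_simps)
      have "t * real n = real K * (t * (real P + real N))" unfolding rn by (simp add: algebra_simps)
      also have "\<dots> < real K * (real K * real P + real k * real N)"
        using lt Kpos by (intro mult_strict_left_mono) auto
      finally show ?thesis unfolding rnN .
    qed
    thus ?thesis unfolding \<alpha>_def using nNpos by (simp add: divide_less_eq)
  qed
  have inst: "is_instance n m G \<alpha>"
    unfolding is_instance_def
  proof (intro conjI allI impI)
    show "1 \<le> n" using nNpos by simp
    show "0 < \<alpha>" by (rule \<alpha>pos)
    have "K \<le> m" unfolding m_def using Kpos by simp
    hence "real K \<le> real m" by simp
    thus "\<alpha> \<le> real m" using \<alpha>K by simp
    fix i show "G i \<subseteq> {0..<m}" unfolding G_def by auto
  qed
  define T where "T = (\<lambda>y. {i. i < K*(P+N) \<and> P \<le> i div K \<and> i mod K = y})"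
  have cardT: "\<And>y. y < K \<Longrightarrow> card (T y) = N" unfolding T_def by (rule cnt)
  have Tsub: "\<And>y. T y \<subseteq> {0..<n}" unfolding T_def n_def by auto
  have main: "\<exists>S. t_cohesive n G \<alpha> t S \<and>
                   avg_sat G A S < t - 1 + c * (1 - c) / t + \<epsilon>"
    if A: "is_allocation m \<alpha> A" for A
  proof -
    have Asub: "A \<subseteq> {0..<m}" and Acard: "real (card A) \<le> \<alpha>" using A unfolding is_allocation_def by auto
    have finA: "finite A" using Asub finite_subset by blast
    have cAK: "card A < K" using Acard \<alpha>K by linarith
    have cAk: "card A \<le> k" using cAK unfolding K_def by simp
    have "card ((\<lambda>g. g div K) ` A) < card {0..<K}" using card_image_le[OF finA, of "\<lambda>g. g div K"] cAK by simp
    hence "\<not> {0..<K} \<subseteq> (\<lambda>g. g div K) ` A"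
      using card_mono[OF finite_imageI[OF finA]] by (meson leD)
    then obtain j where j: "j \<in> {0..<K}" "j \<notin> (\<lambda>g. g div K) ` A" by (meson subsetI)
    hence j: "j < K" "j \<notin> (\<lambda>g. g div K) ` A" by auto
    define S where "S = {0..<n} - T j"
    have finT: "\<And>y. finite (T y)" using Tsub finite_subset by blast
    have cardS: "card S = n - N" unfolding S_def
      using card_Diff_subset[OF finT Tsub[of j]] cardT[OF j(1)] by simp
    have finS: "finite S" unfolding S_def by simp
    have S_iff: "\<And>i. i \<in> S \<longleftrightarrow> i < n \<and> (i div K < P \<or> i mod K \<noteq> j)"
      unfolding S_def T_def n_def by auto
    have Sne: "S \<noteq> {}" using cardS nNpos by auto
    have core: "{j*K..<j*K+K} \<subseteq> (\<Inter>i\<in>S. G i)"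
    proof
      fix g assume g: "g \<in> {j*K..<j*K+K}"
      have gd: "g div K = j"
        using g by (intro div_nat_eqI) (auto simp: algebra_simps)
      have "j*K + K \<le> m"
      proof -
        have "Suc j \<le> K" using j(1) by simp
        hence "Suc j * K \<le> K * K" by (rule mult_le_mono1)
        thus ?thesis unfolding m_def by (simp add: algebra_simps)
      qed
      hence gm: "g < m" using g by simp
      show "g \<in> (\<Inter>i\<in>S. G i)"
      proof (rule INT_I)
        fix i assume "i \<in> S"
        hence "i div K < P \<or> i mod K \<noteq> j" using S_iff by blast
        thus "g \<in> G i" using gm gd unfolding G_def by (cases "i div K < P") auto
      qed
    qed
    have finI: "finite (\<Inter>i\<in>S. G i)"
    proof -
      obtain i0 where "i0 \<in> S" using Sne by auto
      hence "(\<Inter>i\<in>S. G i) \<subseteq> G i0" by auto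
      moreover have "finite (G i0)" unfolding G_def by auto
      ultimately show ?thesis using finite_subset by blast
    qed
    have "card {j*K..<j*K+K} \<le> card (\<Inter>i\<in>S. G i)" by (rule card_mono[OF finI core])
    hence cI: "real K \<le> real (card (\<Inter>i\<in>S. G i))" by simp
    have tK: "t \<le> real K" unfolding K_def using tkc c1 by simp
    have coh: "t_cohesive n G \<alpha> t S"
      unfolding t_cohesive_def
    proof (intro conjI)
      show "S \<subseteq> {0..<n}" unfolding S_def by auto
      show "S \<noteq> {}" by (rule Sne)
      have "t * real n / \<alpha> = real (n - N)" unfolding \<alpha>_def using npos tpos nNpos by simp
      thus "t * real n / \<alpha> \<le> real (card S)" using cardS by simp
      show "t \<le> real (card (\<Inter>i\<in>S. G i))" using cI tK by simp
    qed
    have cnt_g: "card {i\<in>S. g \<in> G i} = n - N - N" if g: "g \<in> A" for g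
    proof -
      define x where "x = g div K"
      have gm: "g < m" using g Asub by auto
      have xK: "x < K" unfolding x_def using gm unfolding m_def
        by (simp add: less_mult_imp_div_less)
      have xj: "x \<noteq> j" using j(2) g unfolding x_def by auto
      have eq: "{i\<in>S. g \<in> G i} = ({0..<n} - T j) - T x"
        unfolding S_def T_def G_def n_def x_def using gm by auto
      have disj: "T x \<subseteq> {0..<n} - T j" using Tsub xj unfolding T_def by auto
      show ?thesis unfolding eq using card_Diff_subset[OF finT disj] cardT[OF xK] cardS
        unfolding S_def by simp
    qed
    have sumeq: "(\<Sum>i\<in>S. real (utility G A i)) = real (card A) * real (n - N - N)"
    proof -
      have "(\<Sum>i\<in>S. real (utility G A i)) = real (\<Sum>i\<in>S. card (G i \<inter> A))"
        unfolding utility_def by simp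
      also have "(\<Sum>i\<in>S. card (G i \<inter> A)) = (\<Sum>g\<in>A. card {i\<in>S. g \<in> G i})"
        by (rule sum_card_swap[OF finS finA])
      also have "\<dots> = (\<Sum>g\<in>A. n - N - N)" using cnt_g by simp
      finally show ?thesis by simp
    qed
    have avg: "avg_sat G A S = real (card A) * real (n - N - N) / real (n - N)"
      unfolding avg_sat_def sumeq cardS by simp
    also have "\<dots> \<le> real k * real (n - N - N) / real (n - N)"
      using cAk nNpos by (intro divide_right_mono mult_right_mono) auto
    also have "\<dots> = real k * (real (Suc k) * real P + (real k - 1) * real N) /
                   (real (Suc k) * real P + real k * real N)"
    proof -
      have r2: "real (n - N - N) = real (Suc k) * real P + (real k - 1) * real N"
      proof -
        obtain k' where kk: "k = Suc k'" using k1 by (cases k) auto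
        show ?thesis unfolding nN2 K_def kk by (simp add: algebra_simps)
      qed
      have r1: "real (n - N) = real (Suc k) * real P + real k * real N"
        unfolding nN K_def by (simp add: algebra_simps)
      show ?thesis unfolding r1 r2 ..
    qed
    also have "\<dots> < t - 1 + c * (1 - c) / t + \<epsilon>"
      by (rule real_ineq[OF k1 tkc c0 c1 P1 P2 _ assms(2)]) (use NK K_def in simp)
    finally show ?thesis using coh by blast
  qed
  show ?thesis unfolding c_def[symmetric] using inst main by blast
qed

end
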